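(* Let $(A,B)$ be a finite-dimensional associative superalgebra over an algebraically closed field $\mathbb{K}$ of characteristic zero endowed with a homogeneous symmetric structure $B$. Then $A$ is an orthogonal (with respect to $B$) direct sum of $B$-irreducible graded two-sided ideals.
   Context: A superalgebra is $\mathbb{Z}_2$-graded, $A=A_{\bar 0}\oplus A_{\bar 1}$, $A_\alpha A_\beta\subseteq A_{\alpha+\beta}$. A homogeneous symmetric structure on $A$ is a bilinear form $B$ which is either even ($B(A_{\bar 0},A_{\bar 1})=0$) or odd ($B(A_{\bar 0},A_{\bar 0})=B(A_{\bar 1},A_{\bar 1})=0$), and is supersymmetric ($B(x,y)=(-1)^{|x||y|}B(y,x)$ for homogeneous $x,y$), associative ($B(xy,z)=B(x,yz)$) and non-degenerate. A graded two-sided ideal $I$ of $A$ is non-degenerate if $B|_{I\times I}$ is non-degenerate, and it is $B$-irreducible if it is non-degenerate and contains no non-degenerate graded two-sided ideal of $A$ other than $\{0\}$ and $I$. *)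

theory Defs
  imports "HOL-Computational_Algebra.Polynomial"
begin

definition fin_dim_assoc_superalgebra ::
  "('k::field \<Rightarrow> 'v::ab_group_add \<Rightarrow> 'v) \<Rightarrow> ('v \<Rightarrow> 'v \<Rightarrow> 'v) \<Rightarrow> 'v set \<Rightarrow> 'v set \<Rightarrow> bool" where
  "fin_dim_assoc_superalgebra sc mul A0 A1 \<longleftrightarrow>
     vector_space sc \<and>
     (\<exists>Basis. finite_dimensional_vector_space sc Basis) \<and>
     (\<forall>x. Vector_Spaces.linear sc sc (mul x)) \<and>
     (\<forall>y. Vector_Spaces.linear sc sc (\<lambda>x. mul x y)) \<and>
     (\<forall>x y z. mul (mul x y) z = mul x (mul y z)) \<and>
     module.subspace sc A0 \<and> module.subspace sc A1 \<and>
     A0 \<inter> A1 = {0} \<and> (\<forall>v. \<exists>a\<in>A0. \<exists>b\<in>A1. v = a + b) \<and>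
     (\<forall>x\<in>A0. \<forall>y\<in>A0. mul x y \<in> A0) \<and>
     (\<forall>x\<in>A0. \<forall>y\<in>A1. mul x y \<in> A1) \<and>
     (\<forall>x\<in>A1. \<forall>y\<in>A0. mul x y \<in> A1) \<and>
     (\<forall>x\<in>A1. \<forall>y\<in>A1. mul x y \<in> A0)"

definition bilinear_form :: "('k::field \<Rightarrow> 'v::ab_group_add \<Rightarrow> 'v) \<Rightarrow> ('v \<Rightarrow> 'v \<Rightarrow> 'k) \<Rightarrow> bool" where
  "bilinear_form sc B \<longleftrightarrow>
     (\<forall>x. Vector_Spaces.linear sc (*) (B x)) \<and> (\<forall>y. Vector_Spaces.linear sc (*) (\<lambda>x. B x y))"

definition nondeg_on :: "('v::zero \<Rightarrow> 'v \<Rightarrow> 'k::zero) \<Rightarrow> 'v set \<Rightarrow> bool" where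
  "nondeg_on B I \<longleftrightarrow> (\<forall>x\<in>I. (\<forall>y\<in>I. B x y = 0) \<longrightarrow> x = 0)"

definition homogeneous_symmetric_structure ::
  "('k::field \<Rightarrow> 'v::ab_group_add \<Rightarrow> 'v) \<Rightarrow> ('v \<Rightarrow> 'v \<Rightarrow> 'v) \<Rightarrow> 'v set \<Rightarrow> 'v set
     \<Rightarrow> ('v \<Rightarrow> 'v \<Rightarrow> 'k) \<Rightarrow> bool" where
  "homogeneous_symmetric_structure sc mul A0 A1 B \<longleftrightarrow>
     bilinear_form sc B \<and>
     ((\<forall>x\<in>A0. \<forall>y\<in>A1. B x y = 0) \<or>
      ((\<forall>x\<in>A0. \<forall>y\<in>A0. B x y = 0) \<and> (\<forall>x\<in>A1. \<forall>y\<in>A1. B x y = 0))) \<and>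
     (\<forall>x\<in>A0. \<forall>y\<in>A0. B x y = B y x) \<and>
     (\<forall>x\<in>A0. \<forall>y\<in>A1. B x y = B y x) \<and>
     (\<forall>x\<in>A1. \<forall>y\<in>A0. B x y = B y x) \<and>
     (\<forall>x\<in>A1. \<forall>y\<in>A1. B x y = - B y x) \<and>
     (\<forall>x y z. B (mul x y) z = B x (mul y z)) \<and>
     nondeg_on B UNIV"

definition graded_ideal ::
  "('k::field \<Rightarrow> 'v::ab_group_add \<Rightarrow> 'v) \<Rightarrow> ('v \<Rightarrow> 'v \<Rightarrow> 'v) \<Rightarrow> 'v set \<Rightarrow> 'v set \<Rightarrow> 'v set \<Rightarrow> bool" where
  "graded_ideal sc mul A0 A1 I \<longleftrightarrow>
     module.subspace sc I \<and>
     (\<forall>x\<in>I. \<exists>a\<in>I \<inter> A0. \<exists>b\<in>I \<inter> A1. x = a + b) \<and>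
     (\<forall>a x. x \<in> I \<longrightarrow> mul a x \<in> I \<and> mul x a \<in> I)"

definition B_irreducible ::
  "('k::field \<Rightarrow> 'v::ab_group_add \<Rightarrow> 'v) \<Rightarrow> ('v \<Rightarrow> 'v \<Rightarrow> 'v) \<Rightarrow> 'v set \<Rightarrow> 'v set
     \<Rightarrow> ('v \<Rightarrow> 'v \<Rightarrow> 'k) \<Rightarrow> 'v set \<Rightarrow> bool" where
  "B_irreducible sc mul A0 A1 B I \<longleftrightarrow>
     graded_ideal sc mul A0 A1 I \<and> nondeg_on B I \<and>
     (\<forall>J. graded_ideal sc mul A0 A1 J \<and> nondeg_on B J \<and> J \<subseteq> I \<longrightarrow> J = {0} \<or> J = I)"

end

theory Submission imports Defs begin

locale SA = finite_dimensional_vector_space sc Basis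
  for sc :: "'k::field \<Rightarrow> 'v::ab_group_add \<Rightarrow> 'v" and Basis +
  fixes mul :: "'v \<Rightarrow> 'v \<Rightarrow> 'v" and A0 A1 :: "'v set" and B :: "'v \<Rightarrow> 'v \<Rightarrow> 'k"
  assumes sub0: "subspace A0" and sub1: "subspace A1" and int01: "A0 \<inter> A1 = {0}"
    and dec: "\<forall>v. \<exists>a\<in>A0. \<exists>b\<in>A1. v = a + b"
    and bil: "bilinear_form sc B"
    and par: "(\<forall>x\<in>A0. \<forall>y\<in>A1. B x y = 0) \<or>
      ((\<forall>x\<in>A0. \<forall>y\<in>A0. B x y = 0) \<and> (\<forall>x\<in>A1. \<forall>y\<in>A1. B x y = 0))"
    and s00: "\<forall>x\<in>A0. \<forall>y\<in>A0. B x y = B y x"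
    and s01: "\<forall>x\<in>A0. \<forall>y\<in>A1. B x y = B y x"
    and s10: "\<forall>x\<in>A1. \<forall>y\<in>A0. B x y = B y x"
    and s11: "\<forall>x\<in>A1. \<forall>y\<in>A1. B x y = - B y x"
    and Bassoc: "\<forall>x y z. B (mul x y) z = B x (mul y z)"
    and nd: "nondeg_on B UNIV"
begin

lemma lin1: "Vector_Spaces.linear sc (*) (\<lambda>x. B x y)" using bil unfolding bilinear_form_def by auto
lemma lin2: "Vector_Spaces.linear sc (*) (B x)" using bil unfolding bilinear_form_def by auto

lemma Badd1: "B (x + y) z = B x z + B y z"
  using lin1[of z] unfolding Vector_Spaces.linear_iff by auto
lemma Badd2: "B z (x + y) = B z x + B z y"
  using lin2[of z] unfolding Vector_Spaces.linear_iff by auto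
lemma Bscale2: "B z (sc c x) = c * B z x"
  using lin2[of z] unfolding Vector_Spaces.linear_iff by auto
lemma B01[simp]: "B 0 z = 0"
  using Badd1[of 0 0 z] by (metis add.right_neutral add_left_cancel)
lemma B02[simp]: "B z 0 = 0"
  using Badd2[of z 0 0] by (metis add.right_neutral add_left_cancel)
lemma Bdiff1: "B (x - y) z = B x z - B y z"
  using Badd1[of "x - y" y z] by (simp add: algebra_simps)
lemma Bdiff2: "B z (x - y) = B z x - B z y"
  using Badd2[of z "x - y" y] by (simp add: algebra_simps)
lemma Bsum1: "B (sum h S) z = (\<Sum>K\<in>S. B (h K) z)"
  by (induction S rule: infinite_finite_induct) (auto simp: Badd1)

lemma dec_unique: "a \<in> A0 \<Longrightarrow> a' \<in> A0 \<Longrightarrow> b \<in> A1 \<Longrightarrow> b' \<in> A1 \<Longrightarrow> a + b = a' + b' \<Longrightarrow> a = a' \<and> b = b'"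
proof -
  assume h: "a \<in> A0" "a' \<in> A0" "b \<in> A1" "b' \<in> A1" "a + b = a' + b'"
  have "a - a' = b' - b" using h(5) by (simp add: algebra_simps)
  moreover have "a - a' \<in> A0" "b' - b \<in> A1" using h sub0 sub1 subspace_diff by auto
  ultimately have "a - a' \<in> A0 \<inter> A1" by simp
  then have "a - a' = 0" using int01 by blast
  then have "a = a'" by simp
  then show ?thesis using h(5) by simp
qed

lemma homog_sym: "x \<in> A0 \<or> x \<in> A1 \<Longrightarrow> B y x = B x y \<or> B y x = - B x y"
proof -
  assume hx: "x \<in> A0 \<or> x \<in> A1"
  obtain y0 y1 where y: "y0 \<in> A0" "y1 \<in> A1" "y = y0 + y1" using dec by blast
  have e: "B y x = B y0 x + B y1 x" "B x y = B x y0 + B x y1" using y by (auto simp: Badd1 Badd2)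
  from par show ?thesis
  proof
    assume E: "\<forall>x\<in>A0. \<forall>y\<in>A1. B x y = 0"
    from hx show ?thesis
    proof
      assume x: "x \<in> A0"
      have "B y0 x = B x y0" using s00 x y by blast
      moreover have "B y1 x = B x y1" using s10 x y by blast
      ultimately show ?thesis using e by simp
    next
      assume x: "x \<in> A1"
      have "B y0 x = 0" using E x y by blast
      moreover have "B x y0 = 0" using s10 E x y by metis
      moreover have "B y1 x = - B x y1" using s11 x y by blast
      ultimately show ?thesis using e by simp
    qed
  next
    assume E: "(\<forall>x\<in>A0. \<forall>y\<in>A0. B x y = 0) \<and> (\<forall>x\<in>A1. \<forall>y\<in>A1. B x y = 0)"
    from hx show ?thesis
    proof
      assume x: "x \<in> A0"
      have "B y0 x = 0" "B x y0 = 0" using E x y by blast+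
      moreover have "B y1 x = B x y1" using s10 x y by blast
      ultimately show ?thesis using e by simp
    next
      assume x: "x \<in> A1"
      have "B y1 x = 0" "B x y1 = 0" using E x y by blast+
      moreover have "B y0 x = B x y0" using s01 x y by blast
      ultimately show ?thesis using e by simp
    qed
  qed
qed

lemma homog_split: "x \<in> A0 \<or> x \<in> A1 \<Longrightarrow> y0 \<in> A0 \<Longrightarrow> y1 \<in> A1 \<Longrightarrow> B x y0 = 0 \<or> B x y1 = 0"
proof -
  assume hx: "x \<in> A0 \<or> x \<in> A1" and y: "y0 \<in> A0" "y1 \<in> A1"
  from par show ?thesis
  proof
    assume E: "\<forall>x\<in>A0. \<forall>y\<in>A1. B x y = 0"
    from hx show ?thesis
    proof
      assume x: "x \<in> A0" then show ?thesis using E y by blast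
    next
      assume x: "x \<in> A1"
      have "B y0 x = 0" using E x y by blast
      then show ?thesis using s10 x y by metis
    qed
  next
    assume E: "(\<forall>x\<in>A0. \<forall>y\<in>A0. B x y = 0) \<and> (\<forall>x\<in>A1. \<forall>y\<in>A1. B x y = 0)"
    then show ?thesis using hx y by blast
  qed
qed


lemma Bscale1: "B (sc c x) z = c * B x z"
  using lin1[of z] unfolding Vector_Spaces.linear_iff by auto

lemma lin_diff: "Vector_Spaces.linear sc (*) f \<Longrightarrow> f (x - y) = f x - f y"
proof -
  assume l: "Vector_Spaces.linear sc (*) f"
  have "f ((x - y) + y) = f (x - y) + f y" using l unfolding Vector_Spaces.linear_iff by blast
  then show ?thesis by (simp add: algebra_simps)
qed

lemma lin_scale: "Vector_Spaces.linear sc (*) f \<Longrightarrow> f (sc c x) = c * f x"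
  unfolding Vector_Spaces.linear_iff by blast

lemma codim1:
  assumes W: "subspace W" and l: "Vector_Spaces.linear sc (*) f"
  shows "dim W \<le> dim (W \<inter> {y. f y = 0}) + 1"
proof (cases "\<forall>w\<in>W. f w = 0")
  case True
  then have "W \<inter> {y. f y = 0} = W" by auto
  then show ?thesis by simp
next
  case False
  then obtain w0 where w0: "w0 \<in> W" "f w0 \<noteq> 0" by blast
  let ?K = "W \<inter> {y. f y = 0}"
  have "W \<subseteq> span (insert w0 ?K)"
  proof
    fix w assume w: "w \<in> W"
    define c where "c = f w / f w0"
    have "f (w - sc c w0) = f w - c * f w0" using lin_diff[OF l] lin_scale[OF l] by simp
    also have "\<dots> = 0" using w0 by (simp add: c_def)
    finally have "w - sc c w0 \<in> ?K" using w w0 W subspace_diff subspace_scale by blast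
    then have "w - sc c w0 \<in> span (insert w0 ?K)" by (simp add: span_base)
    moreover have "sc c w0 \<in> span (insert w0 ?K)" by (simp add: span_base span_scale)
    ultimately have "(w - sc c w0) + sc c w0 \<in> span (insert w0 ?K)" by (rule span_add)
    then show "w \<in> span (insert w0 ?K)" by simp
  qed
  then have "dim W \<le> dim (insert w0 ?K)" by (rule dim_mono)
  also have "\<dots> \<le> dim ?K + 1" by (simp add: dim_insert)
  finally show ?thesis .
qed

lemma subspace_perpE: "subspace {y. \<forall>e\<in>E. B e y = 0}"
  by (rule subspaceI) (auto simp: Badd2 Bscale2)

lemma perp_fin: "finite E \<Longrightarrow> dimension \<le> dim {y. \<forall>e\<in>E. B e y = 0} + card E"
proof (induction E rule: finite_induct)
  case empty
  then show ?case by (simp add: dimension_def)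
next
  case (insert e E)
  let ?W = "{y. \<forall>e\<in>E. B e y = 0}"
  have eq: "{y. \<forall>e'\<in>insert e E. B e' y = 0} = ?W \<inter> {y. B e y = 0}" by auto
  have "dim ?W \<le> dim (?W \<inter> {y. B e y = 0}) + 1"
    by (rule codim1[OF subspace_perpE lin2])
  then show ?case using insert eq by simp
qed

lemma dim_direct:
  assumes S: "subspace S" and T: "subspace T" and ST: "S \<inter> T = {0}"
  shows "dim S + dim T \<le> dim {x + y |x y. x \<in> S \<and> y \<in> T}"
proof -
  obtain b where b: "finite b" "b \<subseteq> S" "independent b" "span b = S" "card b = dim S"
    using basis_subspace_exists[OF S] by blast
  obtain c where c: "finite c" "c \<subseteq> T" "independent c" "span c = T" "card c = dim T"
    using basis_subspace_exists[OF T] by blast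
  have key: "finite c' \<Longrightarrow> c' \<subseteq> c \<Longrightarrow> dim (b \<union> c') = card b + card c'" for c'
  proof (induction c' rule: finite_induct)
    case empty
    then show ?case using b by (simp add: dim_eq_card_independent)
  next
    case (insert x F)
    have xc: "x \<in> c" and Fc: "F \<subseteq> c" using insert by auto
    have "x \<notin> span (b \<union> F)"
    proof
      assume "x \<in> span (b \<union> F)"
      then obtain s t where st: "x = s + t" "s \<in> span b" "t \<in> span F" unfolding span_Un by blast
      have tT: "t \<in> T" using st(3) span_mono[OF Fc] c(4) by blast
      have xT: "x \<in> T" using xc c(2) by blast
      have "s = x - t" using st(1) by simp
      then have "s \<in> T" using xT tT T subspace_diff by simp
      moreover have "s \<in> S" using st(2) b(4) by simp
      ultimately have "s = 0" using ST by blast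
      then have "x \<in> span F" using st by simp
      moreover have "F \<subseteq> c - {x}" using Fc insert.hyps(2) by blast
      ultimately have "x \<in> span (c - {x})" using span_mono by blast
      then have "dependent c" using xc unfolding dependent_def by blast
      then show False using c(3) by simp
    qed
    then have "dim (insert x (b \<union> F)) = dim (b \<union> F) + 1" by (simp add: dim_insert)
    moreover have "b \<union> insert x F = insert x (b \<union> F)" by auto
    ultimately show ?case using insert by simp
  qed
  have "dim (b \<union> c) = dim S + dim T" using key[OF c(1) order_refl] b c by simp
  moreover have "span (b \<union> c) = {x + y |x y. x \<in> S \<and> y \<in> T}"
    unfolding span_Un b(4) c(4) ..
  ultimately show ?thesis by (metis dim_span order_refl)
qed


definition perp :: "'v set \<Rightarrow> 'v set" where "perp I = {y. \<forall>x\<in>I. B x y = 0}"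

abbreviation gi where "gi I \<equiv> graded_ideal sc mul A0 A1 I"

lemma gi_sub: "gi I \<Longrightarrow> subspace I" unfolding graded_ideal_def by blast
lemma gi_dec: "gi I \<Longrightarrow> x \<in> I \<Longrightarrow> \<exists>a\<in>I \<inter> A0. \<exists>b\<in>I \<inter> A1. x = a + b"
  unfolding graded_ideal_def by blast
lemma gi_mul: "gi I \<Longrightarrow> x \<in> I \<Longrightarrow> mul a x \<in> I \<and> mul x a \<in> I"
  unfolding graded_ideal_def by blast

lemma homog_zero_sym: "x \<in> A0 \<or> x \<in> A1 \<Longrightarrow> B x y = 0 \<longleftrightarrow> B y x = 0"
  using homog_sym[of x y] by auto

lemma perp_sym1: "gi I \<Longrightarrow> y \<in> perp I \<Longrightarrow> x \<in> I \<Longrightarrow> B y x = 0"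
proof -
  assume g: "gi I" and y: "y \<in> perp I" and x: "x \<in> I"
  obtain a b where ab: "a \<in> I \<inter> A0" "b \<in> I \<inter> A1" "x = a + b" using gi_dec[OF g x] by blast
  have "B a y = 0" "B b y = 0" using y ab unfolding perp_def by auto
  then have "B y a = 0" "B y b = 0" using homog_zero_sym ab by blast+
  then show ?thesis using ab by (simp add: Badd2)
qed

lemma perp_sym2: "gi I \<Longrightarrow> (\<forall>x\<in>I. B y x = 0) \<Longrightarrow> y \<in> perp I"
proof -
  assume g: "gi I" and y: "\<forall>x\<in>I. B y x = 0"
  show ?thesis unfolding perp_def
  proof (safe)
    fix x assume x: "x \<in> I"
    obtain a b where ab: "a \<in> I \<inter> A0" "b \<in> I \<inter> A1" "x = a + b" using gi_dec[OF g x] by blast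
    have "B y a = 0" "B y b = 0" using y ab by auto
    then have "B a y = 0" "B b y = 0" using homog_zero_sym ab by blast+
    then show "B x y = 0" using ab by (simp add: Badd1)
  qed
qed

lemma homog_perp_split: "h \<in> A0 \<or> h \<in> A1 \<Longrightarrow> B h (y0 + y1) = 0 \<Longrightarrow> y0 \<in> A0 \<Longrightarrow> y1 \<in> A1 \<Longrightarrow> B h y0 = 0 \<and> B h y1 = 0"
  using homog_split[of h y0 y1] by (auto simp: Badd2)

lemma perp_gi: assumes g: "gi I" shows "gi (perp I)"
proof -
  have sub: "subspace (perp I)" unfolding perp_def by (rule subspaceI) (auto simp: Badd2 Bscale2)
  have dec': "\<exists>a\<in>perp I \<inter> A0. \<exists>b\<in>perp I \<inter> A1. y = a + b" if y: "y \<in> perp I" for y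
  proof -
    obtain y0 y1 where yy: "y0 \<in> A0" "y1 \<in> A1" "y = y0 + y1" using dec by blast
    have "B x y0 = 0 \<and> B x y1 = 0" if x: "x \<in> I" for x
    proof -
      obtain a b where ab: "a \<in> I \<inter> A0" "b \<in> I \<inter> A1" "x = a + b" using gi_dec[OF g x] by blast
      have "B a (y0 + y1) = 0" "B b (y0 + y1) = 0" using y ab yy unfolding perp_def by auto
      then have "B a y0 = 0 \<and> B a y1 = 0" "B b y0 = 0 \<and> B b y1 = 0"
        using homog_perp_split ab yy by blast+
      then show ?thesis using ab by (simp add: Badd1)
    qed
    then have "y0 \<in> perp I" "y1 \<in> perp I" unfolding perp_def by auto
    then show ?thesis using yy by blast
  qed
  have mul': "mul c y \<in> perp I \<and> mul y c \<in> perp I" if y: "y \<in> perp I" for c y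
  proof
    show "mul c y \<in> perp I" unfolding perp_def
    proof safe
      fix x assume x: "x \<in> I"
      have "B x (mul c y) = B (mul x c) y" using Bassoc by simp
      also have "\<dots> = 0" using y gi_mul[OF g x] unfolding perp_def by blast
      finally show "B x (mul c y) = 0" .
    qed
    show "mul y c \<in> perp I"
    proof (rule perp_sym2[OF g], safe)
      fix x assume x: "x \<in> I"
      have "B (mul y c) x = B y (mul c x)" using Bassoc by simp
      also have "\<dots> = 0" using perp_sym1[OF g y] gi_mul[OF g x] by blast
      finally show "B (mul y c) x = 0" .
    qed
  qed
  show ?thesis unfolding graded_ideal_def using sub dec' mul' by blast
qed

lemma gi_inter: assumes I: "gi I" and J: "gi J" shows "gi (I \<inter> J)"
proof -
  have sub: "subspace (I \<inter> J)" using gi_sub[OF I] gi_sub[OF J] subspace_inter by blast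
  have dec': "\<exists>a\<in>(I \<inter> J) \<inter> A0. \<exists>b\<in>(I \<inter> J) \<inter> A1. x = a + b" if x: "x \<in> I \<inter> J" for x
  proof -
    obtain a b where ab: "a \<in> I \<inter> A0" "b \<in> I \<inter> A1" "x = a + b" using gi_dec[OF I] x by blast
    obtain a' b' where ab': "a' \<in> J \<inter> A0" "b' \<in> J \<inter> A1" "x = a' + b'" using gi_dec[OF J] x by blast
    have "a = a' \<and> b = b'" using dec_unique[of a a' b b'] ab ab' by auto
    then show ?thesis using ab ab' by blast
  qed
  show ?thesis unfolding graded_ideal_def using sub dec' gi_mul[OF I] gi_mul[OF J] by blast
qed

lemma inter_perp: "gi I \<Longrightarrow> nondeg_on B I \<Longrightarrow> I \<inter> perp I = {0}"
proof -
  assume g: "gi I" and n: "nondeg_on B I"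
  have "x = 0" if x: "x \<in> I" "x \<in> perp I" for x
    using n perp_sym1[OF g x(2)] x(1) unfolding nondeg_on_def by blast
  moreover have "0 \<in> I \<inter> perp I" using gi_sub[OF g] gi_sub[OF perp_gi[OF g]] subspace_0 by blast
  ultimately show ?thesis by blast
qed

lemma perp_split: assumes g: "gi I" and n: "nondeg_on B I"
  shows "\<exists>u\<in>I. \<exists>w\<in>perp I. v = u + w"
proof -
  have S: "subspace I" using gi_sub[OF g] .
  have T: "subspace (perp I)" using gi_sub[OF perp_gi[OF g]] .
  obtain b where b: "finite b" "b \<subseteq> I" "independent b" "span b = I" "card b = dim I"
    using basis_subspace_exists[OF S] by blast
  have sub1: "{y. \<forall>e\<in>b. B e y = 0} \<subseteq> perp I"
  proof
    fix y assume y: "y \<in> {y. \<forall>e\<in>b. B e y = 0}"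
    have ss: "subspace {x. B x y = 0}" by (rule subspaceI) (auto simp: Badd1 Bscale1)
    have "b \<subseteq> {x. B x y = 0}" using y by auto
    then have "span b \<subseteq> {x. B x y = 0}" using span_minimal ss by blast
    then show "y \<in> perp I" using b(4) unfolding perp_def by auto
  qed
  have "dimension \<le> dim {y. \<forall>e\<in>b. B e y = 0} + card b" using perp_fin[OF b(1)] .
  also have "\<dots> \<le> dim (perp I) + dim I" using dim_subset[OF sub1] b(5) by simp
  also have "\<dots> \<le> dim {x + y |x y. x \<in> I \<and> y \<in> perp I}"
    using dim_direct[OF S T inter_perp[OF g n]] by simp
  finally have d: "dimension \<le> dim {x + y |x y. x \<in> I \<and> y \<in> perp I}" .
  have "dim {x + y |x y. x \<in> I \<and> y \<in> perp I} = dimension"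
    using d dim_subset_UNIV by (simp add: le_antisym)
  then have su: "span {x + y |x y. x \<in> I \<and> y \<in> perp I} = UNIV" using dim_eq_full by blast
  have "subspace {x + y |x y. x \<in> I \<and> y \<in> perp I}" using subspace_sums[OF S T] .
  then have "span {x + y |x y. x \<in> I \<and> y \<in> perp I} = {x + y |x y. x \<in> I \<and> y \<in> perp I}"
    by (simp only: span_eq_iff)
  then have "{x + y |x y. x \<in> I \<and> y \<in> perp I} = UNIV" using su by simp
  then show ?thesis by blast
qed


definition goodfam where "goodfam J \<I> \<longleftrightarrow> finite \<I> \<and>
   (\<forall>I\<in>\<I>. B_irreducible sc mul A0 A1 B I \<and> I \<subseteq> J) \<and>
   (\<forall>I\<in>\<I>. \<forall>K\<in>\<I>. I \<noteq> K \<longrightarrow> (\<forall>x\<in>I. \<forall>y\<in>K. B x y = 0)) \<and>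
   (\<forall>v\<in>J. \<exists>f. (\<forall>I\<in>\<I>. f I \<in> I) \<and> v = (\<Sum>I\<in>\<I>. f I))"

lemma decomp_aux: "\<forall>J. dim J = n \<longrightarrow> gi J \<longrightarrow> nondeg_on B J \<longrightarrow> (\<exists>\<I>. goodfam J \<I>)"
proof (induction n rule: less_induct)
  case (less n)
  show ?case
  proof (intro allI impI)
  fix J assume dJ: "dim J = n" and gJ: "gi J" and nJ: "nondeg_on B J"
  show "\<exists>\<I>. goodfam J \<I>"
  proof (cases "J = {0}")
    case True
    have r: "\<forall>v\<in>J. \<exists>f. (\<forall>I\<in>{}. f I \<in> I) \<and> v = (\<Sum>I\<in>{}. f I)" 
    proof
      fix v assume "v \<in> J"
      then have "v = 0" using True by blast
      then show "\<exists>f. (\<forall>I\<in>{}. f I \<in> I) \<and> v = (\<Sum>I\<in>{}. f I)"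
        by (intro exI[of _ "\<lambda>_. 0"]) simp
    qed
    show ?thesis unfolding goodfam_def
      apply (rule exI[of _ "{}"])
      apply (intro conjI)
          apply (rule finite.emptyI)
        apply (rule ballI, erule emptyE)
       apply (rule ballI, erule emptyE)
      apply (rule r)
      done
  next
    case False
    let ?C = "{I. gi I \<and> nondeg_on B I \<and> I \<subseteq> J \<and> I \<noteq> {0}}"
    have "J \<in> ?C" using gJ nJ False by blast
    then obtain I where I: "I \<in> ?C" and Imin: "\<And>K. K \<in> ?C \<Longrightarrow> dim I \<le> dim K"
      using ex_has_least_nat[of "\<lambda>I. I \<in> ?C" J dim] by blast
    have gI: "gi I" and nI: "nondeg_on B I" and IJ: "I \<subseteq> J" and I0: "I \<noteq> {0}" using I by auto
    have irr: "B_irreducible sc mul A0 A1 B I"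
      unfolding B_irreducible_def
    proof (intro conjI gI nI allI impI)
      fix K assume K: "gi K \<and> nondeg_on B K \<and> K \<subseteq> I"
      show "K = {0} \<or> K = I"
      proof (cases "K = {0}")
        case False
        then have "K \<in> ?C" using K IJ by blast
        then have "dim I \<le> dim K" by (rule Imin)
        moreover have "subspace K" using K gi_sub by blast
        moreover have "subspace I" using gi_sub[OF gI] .
        ultimately have "K = I" using subspace_dim_equal[of K I] K by blast
        then show ?thesis by blast
      qed simp
    qed
    let ?J' = "J \<inter> perp I"
    have gJ': "gi ?J'" using gi_inter[OF gJ perp_gi[OF gI]] .
    have split: "\<exists>u\<in>I. \<exists>w\<in>?J'. v = u + w" if v: "v \<in> J" for v
    proof -
      obtain u w where uw: "u \<in> I" "w \<in> perp I" "v = u + w" using perp_split[OF gI nI] by blast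
      have "w = v - u" using uw by simp
      moreover have "u \<in> J" using uw IJ by blast
      ultimately have "w \<in> J" using v gi_sub[OF gJ] subspace_diff by simp
      then show ?thesis using uw by blast
    qed
    have nJ': "nondeg_on B ?J'" unfolding nondeg_on_def
    proof (intro ballI impI)
      fix y assume y: "y \<in> ?J'" and hy: "\<forall>z\<in>?J'. B y z = 0"
      have "\<forall>v\<in>J. B y v = 0"
      proof
        fix v assume "v \<in> J"
        then obtain u w where uw: "u \<in> I" "w \<in> ?J'" "v = u + w" using split by blast
        have "B y u = 0" using perp_sym1[OF gI _ uw(1)] y by blast
        moreover have "B y w = 0" using hy uw by blast
        ultimately show "B y v = 0" using uw by (simp add: Badd2)
      qed
      then show "y = 0" using nJ y unfolding nondeg_on_def by blast
    qed
    have ip: "I \<inter> perp I = {0}" using inter_perp[OF gI nI] .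
    have "0 \<in> I" using gi_sub[OF gI] subspace_0 by blast
    then obtain x where x: "x \<in> I" "x \<noteq> 0" using I0 by blast
    have "x \<notin> ?J'" using x ip by blast
    then have psub: "?J' \<subset> J" using x IJ by blast
    have sJ': "subspace ?J'" using gi_sub[OF gJ'] .
    have e1: "span ?J' = ?J'" using sJ' by simp
    have e2: "span J = J" using gi_sub[OF gJ] by simp
    have "span ?J' \<subset> span J" unfolding e1 e2 by (rule psub)
    then have dlt: "dim ?J' < dim J" by (rule dim_psubset)
    have IH: "\<exists>\<I>. finite \<I> \<and>
   (\<forall>I\<in>\<I>. B_irreducible sc mul A0 A1 B I \<and> I \<subseteq> ?J') \<and>
   (\<forall>I\<in>\<I>. \<forall>K\<in>\<I>. I \<noteq> K \<longrightarrow> (\<forall>x\<in>I. \<forall>y\<in>K. B x y = 0)) \<and>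
   (\<forall>v\<in>?J'. \<exists>f. (\<forall>I\<in>\<I>. f I \<in> I) \<and> v = (\<Sum>I\<in>\<I>. f I))"
      using less[rule_format, OF dlt[unfolded dJ] refl gJ' nJ'] unfolding goodfam_def .

    then obtain \<I> where H: "finite \<I> \<and>
   (\<forall>I\<in>\<I>. B_irreducible sc mul A0 A1 B I \<and> I \<subseteq> ?J') \<and>
   (\<forall>I\<in>\<I>. \<forall>K\<in>\<I>. I \<noteq> K \<longrightarrow> (\<forall>x\<in>I. \<forall>y\<in>K. B x y = 0)) \<and>
   (\<forall>v\<in>?J'. \<exists>f. (\<forall>I\<in>\<I>. f I \<in> I) \<and> v = (\<Sum>I\<in>\<I>. f I))" ..
    note fin = conjunct1[OF H]
    note irr' = conjunct1[OF conjunct2[OF H]]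
    note orth = conjunct1[OF conjunct2[OF conjunct2[OF H]]]
    note rep = conjunct2[OF conjunct2[OF conjunct2[OF H]]]
    have Inot: "I \<notin> \<I>"
    proof
      assume "I \<in> \<I>"
      then have "I \<subseteq> perp I" using irr' by blast
      then show False using x ip by blast
    qed
    have orthI: "\<forall>x\<in>I. \<forall>y\<in>K. B x y = 0 \<and> B y x = 0" if K: "K \<in> \<I>" for K
    proof (intro ballI)
      fix x y assume "x \<in> I" "y \<in> K"
      moreover have "y \<in> perp I" using K irr' \<open>y \<in> K\<close> by blast
      ultimately show "B x y = 0 \<and> B y x = 0" using perp_sym1[OF gI \<open>y \<in> perp I\<close>] unfolding perp_def by blast
    qed
    show ?thesis unfolding goodfam_def
    proof (rule exI[of _ "insert I \<I>"], intro conjI)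
      show "finite (insert I \<I>)" using fin by simp
      show "\<forall>K\<in>insert I \<I>. B_irreducible sc mul A0 A1 B K \<and> K \<subseteq> J" using irr IJ irr' by blast
      show "\<forall>K\<in>insert I \<I>. \<forall>L\<in>insert I \<I>. K \<noteq> L \<longrightarrow> (\<forall>x\<in>K. \<forall>y\<in>L. B x y = 0)"
      proof (intro ballI impI)
        fix K L x y assume K: "K \<in> insert I \<I>" and L: "L \<in> insert I \<I>" and KL: "K \<noteq> L"
          and x: "x \<in> K" and y: "y \<in> L"
        show "B x y = 0"
        proof (cases "K = I")
          case True
          then have "L \<in> \<I>" using L KL by blast
          then show ?thesis using orthI[of L] x y True by blast
        next
          case False
          then have K': "K \<in> \<I>" using K by blast
          show ?thesis
          proof (cases "L = I")
            case True
            then show ?thesis using orthI[OF K'] x y by blast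
          next
            case False
            then have "L \<in> \<I>" using L by blast
            then show ?thesis using orth K' KL x y by blast
          qed
        qed
      qed
      show "\<forall>v\<in>J. \<exists>f. (\<forall>K\<in>insert I \<I>. f K \<in> K) \<and> v = (\<Sum>K\<in>insert I \<I>. f K)"
      proof
        fix v assume "v \<in> J"
        then obtain u w where uw: "u \<in> I" "w \<in> ?J'" "v = u + w" using split by blast
        obtain f where f: "\<forall>I\<in>\<I>. f I \<in> I" "w = (\<Sum>I\<in>\<I>. f I)" using rep uw(2) by blast
        let ?g = "f(I := u)"
        have "(\<Sum>K\<in>insert I \<I>. ?g K) = u + (\<Sum>K\<in>\<I>. ?g K)" using fin Inot by simp
        also have "(\<Sum>K\<in>\<I>. ?g K) = (\<Sum>K\<in>\<I>. f K)" using Inot by (intro sum.cong) auto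
        finally have "v = (\<Sum>K\<in>insert I \<I>. ?g K)" using uw f by simp
        moreover have "\<forall>K\<in>insert I \<I>. ?g K \<in> K" using f uw Inot by auto
        ultimately show "\<exists>f. (\<forall>K\<in>insert I \<I>. f K \<in> K) \<and> v = (\<Sum>K\<in>insert I \<I>. f K)"
          by (intro exI[of _ ?g] conjI)
      qed
    qed
  qed
  qed
qed


end

theorem mainTheorem7:
  fixes sc :: "'k::{alg_closed_field, field_char_0} \<Rightarrow> 'v::ab_group_add \<Rightarrow> 'v"
    and mul :: "'v \<Rightarrow> 'v \<Rightarrow> 'v"
    and A0 A1 :: "'v set"
    and B :: "'v \<Rightarrow> 'v \<Rightarrow> 'k"
  assumes "fin_dim_assoc_superalgebra sc mul A0 A1"
    and "homogeneous_symmetric_structure sc mul A0 A1 B"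
  shows "\<exists>\<I>. finite \<I> \<and>
           (\<forall>I\<in>\<I>. B_irreducible sc mul A0 A1 B I) \<and>
           (\<forall>I\<in>\<I>. \<forall>J\<in>\<I>. I \<noteq> J \<longrightarrow> (\<forall>x\<in>I. \<forall>y\<in>J. B x y = 0)) \<and>
           (\<forall>v. \<exists>!f. (\<forall>I\<in>\<I>. f I \<in> I) \<and> (\<forall>I. I \<notin> \<I> \<longrightarrow> f I = 0) \<and>
                     v = (\<Sum>I\<in>\<I>. f I))"
proof -
  note A = assms(1)[unfolded fin_dim_assoc_superalgebra_def]
  note H = assms(2)[unfolded homogeneous_symmetric_structure_def]
  obtain Basis where fdv: "finite_dimensional_vector_space sc Basis" using A by blast
  have ax: "SA_axioms sc mul A0 A1 B" unfolding SA_axioms_def using A H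
    apply (elim conjE)
    apply (intro conjI)
               apply assumption+
    done
  interpret S: SA sc Basis mul A0 A1 B by (rule SA.intro[OF fdv ax])
  have gU: "graded_ideal sc mul A0 A1 UNIV"
    unfolding graded_ideal_def using S.subspace_UNIV S.dec by blast
  have nU: "nondeg_on B UNIV" by (rule S.nd)
  obtain \<I> where fin: "finite \<I>" and irr: "\<forall>I\<in>\<I>. B_irreducible sc mul A0 A1 B I \<and> I \<subseteq> UNIV"
    and orth: "\<forall>I\<in>\<I>. \<forall>K\<in>\<I>. I \<noteq> K \<longrightarrow> (\<forall>x\<in>I. \<forall>y\<in>K. B x y = 0)"
    and rep: "\<forall>v\<in>UNIV. \<exists>f. (\<forall>I\<in>\<I>. f I \<in> I) \<and> v = (\<Sum>I\<in>\<I>. f I)"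
  proof -
    obtain \<I> where "S.goodfam UNIV \<I>" using S.decomp_aux[rule_format, OF refl gU nU] ..
    then have G: "finite \<I> \<and>
   (\<forall>I\<in>\<I>. B_irreducible sc mul A0 A1 B I \<and> I \<subseteq> UNIV) \<and>
   (\<forall>I\<in>\<I>. \<forall>K\<in>\<I>. I \<noteq> K \<longrightarrow> (\<forall>x\<in>I. \<forall>y\<in>K. B x y = 0)) \<and>
   (\<forall>v\<in>UNIV. \<exists>f. (\<forall>I\<in>\<I>. f I \<in> I) \<and> v = (\<Sum>I\<in>\<I>. f I))" unfolding S.goodfam_def .
    show ?thesis by (rule that[OF conjunct1[OF G] conjunct1[OF conjunct2[OF G]]
       conjunct1[OF conjunct2[OF conjunct2[OF G]]] conjunct2[OF conjunct2[OF conjunct2[OF G]]]])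
  qed
  have uniq: "f = g" if f: "(\<forall>I\<in>\<I>. f I \<in> I) \<and> (\<forall>I. I \<notin> \<I> \<longrightarrow> f I = 0) \<and> v = (\<Sum>I\<in>\<I>. f I)"
    and g: "(\<forall>I\<in>\<I>. g I \<in> I) \<and> (\<forall>I. I \<notin> \<I> \<longrightarrow> g I = 0) \<and> v = (\<Sum>I\<in>\<I>. g I)" for f g v
  proof
    fix I
    show "f I = g I"
    proof (cases "I \<in> \<I>")
      case False
      then show ?thesis using f g by simp
    next
      case True
      have irrI: "B_irreducible sc mul A0 A1 B I" using irr True by blast
      have gI: "graded_ideal sc mul A0 A1 I" and nI: "nondeg_on B I"
        using irrI unfolding B_irreducible_def by blast+
      have sI: "S.subspace I" using S.gi_sub[OF gI] .
      have "f I \<in> I" "g I \<in> I" using f g True by blast+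
      then have dI: "f I - g I \<in> I" using S.subspace_diff[OF sI] by blast
      have s0: "(\<Sum>K\<in>\<I>. f K - g K) = 0" using f g by (simp add: sum_subtractf)
      have "\<forall>x\<in>I. B (f I - g I) x = 0"
      proof
        fix x assume x: "x \<in> I"
        have "0 = B (\<Sum>K\<in>\<I>. f K - g K) x" using s0 by simp
        also have "\<dots> = (\<Sum>K\<in>\<I>. B (f K - g K) x)" by (rule S.Bsum1)
        also have "\<dots> = B (f I - g I) x + (\<Sum>K\<in>\<I> - {I}. B (f K - g K) x)"
          using fin True by (simp add: sum.remove)
        also have "(\<Sum>K\<in>\<I> - {I}. B (f K - g K) x) = 0"
        proof (rule sum.neutral, rule ballI)
          fix K assume K: "K \<in> \<I> - {I}"
          have irrK: "B_irreducible sc mul A0 A1 B K" using irr K by blast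
          have "graded_ideal sc mul A0 A1 K" using irrK unfolding B_irreducible_def by blast
          then have sK: "S.subspace K" by (rule S.gi_sub)
          have "f K \<in> K" "g K \<in> K" using f g K by blast+
          then have "f K - g K \<in> K" using S.subspace_diff[OF sK] by blast
          moreover have "K \<noteq> I" using K by blast
          ultimately show "B (f K - g K) x = 0" using orth K True x by blast
        qed
        finally show "B (f I - g I) x = 0" by simp
      qed
      then have "f I - g I = 0" using nI dI unfolding nondeg_on_def by blast
      then show ?thesis by simp
    qed
  qed
  have ex: "\<exists>f. (\<forall>I\<in>\<I>. f I \<in> I) \<and> (\<forall>I. I \<notin> \<I> \<longrightarrow> f I = 0) \<and> v = (\<Sum>I\<in>\<I>. f I)" for v
  proof -
    obtain f where f: "\<forall>I\<in>\<I>. f I \<in> I" "v = (\<Sum>I\<in>\<I>. f I)" using rep by blast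
    let ?f = "\<lambda>I. if I \<in> \<I> then f I else 0"
    have "(\<Sum>I\<in>\<I>. ?f I) = (\<Sum>I\<in>\<I>. f I)" by (rule sum.cong) auto
    then show ?thesis using f by (intro exI[of _ ?f]) auto
  qed
  show ?thesis
  proof (rule exI[of _ \<I>], intro conjI)
    show "finite \<I>" by (rule fin)
    show "\<forall>I\<in>\<I>. B_irreducible sc mul A0 A1 B I" using irr by blast
    show "\<forall>I\<in>\<I>. \<forall>J\<in>\<I>. I \<noteq> J \<longrightarrow> (\<forall>x\<in>I. \<forall>y\<in>J. B x y = 0)" by (rule orth)
    show "\<forall>v. \<exists>!f. (\<forall>I\<in>\<I>. f I \<in> I) \<and> (\<forall>I. I \<notin> \<I> \<longrightarrow> f I = 0) \<and> v = (\<Sum>I\<in>\<I>. f I)"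
    proof
      fix v
      show "\<exists>!f. (\<forall>I\<in>\<I>. f I \<in> I) \<and> (\<forall>I. I \<notin> \<I> \<longrightarrow> f I = 0) \<and> v = (\<Sum>I\<in>\<I>. f I)"
      proof -
        obtain f where "(\<forall>I\<in>\<I>. f I \<in> I) \<and> (\<forall>I. I \<notin> \<I> \<longrightarrow> f I = 0) \<and> v = (\<Sum>I\<in>\<I>. f I)"
          using ex[of v] by blast
        then show ?thesis using uniq by (intro ex1I[of _ f])
      qed
    qed
  qed
qed

end
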